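(* Let $n\ge2$ and $c\ge0$ be integers and $0\le p\le n$. If $p\ne n$ then $F_q(n-1,n,c,p;0)=G_{n-1,c,p}$, and if $p\ne0$ then $F_q(n-1,n,c,p;-n)=(-1)^{n-1}q^{-3n(n-1)/2}G_{n-1,c+2,p-1}$. Moreover $F_q(n-1,n,c,n;1)=q^{(n+2)(n-1)/2}G_{n-1,c-1,0}$ and $F_q(n-1,n,c,0;-n-1)=(-1)^{n-1}q^{-(n-1)(2n+1)}G_{n-1,c+3,n-1}$.
   Context: For integers $0\le r\le n$ and $c$, an $(r,n,c)$-pattern is an array of integers $(a_{i,j})_{1\le i\le r+1,\ i-1\le j\le n+1}$ with $a_{i,i-1}=0$, $a_{i,n+1}=c$, and for all $2\le i\le r+1$, $i-1\le j\le n$: if $a_{i,j}\le a_{i,j+1}$ then $a_{i,j}\le a_{i-1,j}\le a_{i,j+1}$, and if $a_{i,j}>a_{i,j+1}$ then $a_{i,j}>a_{i-1,j}>a_{i,j+1}$. Its norm is $\sum_{i=1}^{r+1}\sum_{j=i}^{n}a_{i,j}$. An inversion is a pair $(a_{i,j},a_{i,j+1})$ with $a_{i,j}>a_{i,j+1}$ and $i\ne1$; $\operatorname{sgn}(a)=(-1)^{\#\text{inversions}}$. $F_q(r,n,c,p;k_1,\ldots,k_{n-r})=q^{-(k_1+\cdots+k_{n-r})}\sum_a\operatorname{sgn}(a)q^{\operatorname{norm}(a)}$, summed over all $(r,n,c)$-patterns with $a_{r+1,r+i}=k_i$ for $1\le i\le n-r$ and exactly $p$ of $a_{1,1},\ldots,a_{1,n}$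 odd ($q$ an indeterminate). For $m\ge1$, $G_{m,c,p}=\sum_{k=0}^{c}F_q(m-1,m,c,p;k)\,q^k$, with the convention $\sum_{k=0}^{-1}=0$ (this is the generating function of strict plane partitions with parts in $\{1,\ldots,m\}$, at most $c$ columns and $p$ rows of odd length). *)

theory Defs
  imports Main
begin

text \<open>An (r,n,c)-pattern is encoded as a function a :: nat \<Rightarrow> nat \<Rightarrow> int,
  where a i j is the entry a_{i,j} for 1 \<le> i \<le> r+1, i-1 \<le> j \<le> n+1, and a i j = 0
  for all indices outside this range (so that patterns are uniquely determined).\<close>

definition pattern_dom :: "nat \<Rightarrow> nat \<Rightarrow> (nat \<times> nat) set" where
  "pattern_dom r n = {(i, j). 1 \<le> i \<and> i \<le> r + 1 \<and> i - 1 \<le> j \<and> j \<le> n + 1}"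

definition is_pattern :: "nat \<Rightarrow> nat \<Rightarrow> int \<Rightarrow> (nat \<Rightarrow> nat \<Rightarrow> int) \<Rightarrow> bool" where
  "is_pattern r n c a \<longleftrightarrow>
     r \<le> n \<and>
     (\<forall>i j. (i, j) \<notin> pattern_dom r n \<longrightarrow> a i j = 0) \<and>
     (\<forall>i. 1 \<le> i \<and> i \<le> r + 1 \<longrightarrow> a i (i - 1) = 0 \<and> a i (n + 1) = c) \<and>
     (\<forall>i j. 2 \<le> i \<and> i \<le> r + 1 \<and> i - 1 \<le> j \<and> j \<le> n \<longrightarrow>
        (a i j \<le> a i (j + 1) \<longrightarrow> a i j \<le> a (i - 1) j \<and> a (i - 1) j \<le> a i (j + 1)) \<and>
        (a i j > a i (j + 1) \<longrightarrow> a i j > a (i - 1) j \<and> a (i - 1) j > a i (j + 1)))"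

definition pattern_norm :: "nat \<Rightarrow> nat \<Rightarrow> (nat \<Rightarrow> nat \<Rightarrow> int) \<Rightarrow> int" where
  "pattern_norm r n a = (\<Sum>i = 1..r + 1. \<Sum>j = i..n. a i j)"

definition inversions :: "nat \<Rightarrow> nat \<Rightarrow> (nat \<Rightarrow> nat \<Rightarrow> int) \<Rightarrow> (nat \<times> nat) set" where
  "inversions r n a = {(i, j). 2 \<le> i \<and> i \<le> r + 1 \<and> i - 1 \<le> j \<and> j \<le> n \<and> a i j > a i (j + 1)}"

definition pattern_sgn :: "nat \<Rightarrow> nat \<Rightarrow> (nat \<Rightarrow> nat \<Rightarrow> int) \<Rightarrow> int" where
  "pattern_sgn r n a = (-1) ^ card (inversions r n a)"

definition patterns_with :: "nat \<Rightarrow> nat \<Rightarrow> int \<Rightarrow> nat \<Rightarrow> int list \<Rightarrow> (nat \<Rightarrow> nat \<Rightarrow> int) set" where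
  "patterns_with r n c p k = {a. is_pattern r n c a \<and>
      (\<forall>i. 1 \<le> i \<and> i \<le> n - r \<longrightarrow> a (r + 1) (r + i) = k ! (i - 1)) \<and>
      card {j \<in> {1..n}. odd (a 1 j)} = p}"

definition Fq :: "'a::field \<Rightarrow> nat \<Rightarrow> nat \<Rightarrow> int \<Rightarrow> nat \<Rightarrow> int list \<Rightarrow> 'a" where
  "Fq q r n c p k = q powi (- sum_list k) *
     (\<Sum>a\<in>patterns_with r n c p k. of_int (pattern_sgn r n a) * q powi (pattern_norm r n a))"

definition Gq :: "'a::field \<Rightarrow> nat \<Rightarrow> int \<Rightarrow> nat \<Rightarrow> 'a" where
  "Gq q m c p = (\<Sum>k\<in>{0..c}. Fq q (m - 1) m c p [k] * q powi k)"

end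

theory Submission
  imports Defs
begin

definition btw :: "int \<Rightarrow> int \<Rightarrow> int \<Rightarrow> bool" where
  "btw x y z \<longleftrightarrow> (x \<le> y \<longrightarrow> x \<le> z \<and> z \<le> y) \<and> (x > y \<longrightarrow> x > z \<and> z > y)"

lemma is_pattern_iff:
  "is_pattern r n c a \<longleftrightarrow> r \<le> n \<and> (\<forall>i j. (i,j) \<notin> pattern_dom r n \<longrightarrow> a i j = 0)
    \<and> (\<forall>i. 1\<le>i \<and> i\<le>r+1 \<longrightarrow> a i (i-1) = 0 \<and> a i (n+1) = c)
    \<and> (\<forall>i j. 2\<le>i \<and> i\<le>r+1 \<and> i-1\<le>j \<and> j\<le>n \<longrightarrow> btw (a i j) (a i (j+1)) (a (i-1) j))"
  by (simp add: is_pattern_def btw_def)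

lemma pat_btw:
  assumes "is_pattern r n c a" "2 \<le> i" "i \<le> r+1" "i-1 \<le> j" "j \<le> n"
  shows "btw (a i j) (a i (j+1)) (a (i-1) j)"
  using assms unfolding is_pattern_iff by blast

lemma pat_out: "is_pattern r n c a \<Longrightarrow> (i,j) \<notin> pattern_dom r n \<Longrightarrow> a i j = 0"
  unfolding is_pattern_iff by blast

lemma pat_left: "is_pattern r n c a \<Longrightarrow> 1 \<le> i \<Longrightarrow> i \<le> r+1 \<Longrightarrow> a i (i-1) = 0"
  unfolding is_pattern_iff by blast

lemma pat_right: "is_pattern r n c a \<Longrightarrow> 1 \<le> i \<Longrightarrow> i \<le> r+1 \<Longrightarrow> a i (n+1) = c"
  unfolding is_pattern_iff by blast

lemma pat_bound:
  assumes P: "is_pattern r n c a"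
    and B: "\<And>j. \<bar>a (r+1) j\<bar> \<le> M"
    and i: "1 \<le> i" "i \<le> r+1"
  shows "\<bar>a i j\<bar> \<le> M"
proof -
  have M0: "0 \<le> M" using B[of 0] by simp
  have "\<forall>j. \<bar>a i j\<bar> \<le> M" using i(2)
  proof (induction rule: inc_induct)
    case base then show ?case using B by blast
  next
    case (step k)
    show ?case
    proof
      fix j
      show "\<bar>a k j\<bar> \<le> M"
      proof (cases "(k,j) \<in> pattern_dom r n")
        case False then show ?thesis using pat_out[OF P False] M0 by simp
      next
        case True
        then have kj: "1 \<le> k" "k - 1 \<le> j" "j \<le> n+1" by (auto simp: pattern_dom_def)
        show ?thesis
        proof (cases "j = n+1")
          case True
          then show ?thesis using pat_right[OF P, of k] pat_right[OF P, of "r+1"] B[of "n+1"] kj step(2) by simp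
        next
          case False
          show ?thesis
          proof (cases "j = k - 1")
            case True then show ?thesis using pat_left[OF P, of k] kj step(2) M0 by simp
          next
            case False2: False
            have "btw (a (Suc k) j) (a (Suc k) (j+1)) (a (Suc k - 1) j)"
              by (rule pat_btw[OF P]) (use kj step(2) False False2 in auto)
            then show ?thesis using step(3)[rule_format, of j] step(3)[rule_format, of "j+1"]
              unfolding btw_def by (auto split: if_splits)
          qed
        qed
      qed
    qed
  qed
  then show ?thesis by blast
qed

lemma finite_pattern_dom: "finite (pattern_dom r n)"
proof -
  have "pattern_dom r n \<subseteq> {1..r+1} \<times> {0..n+1}" by (auto simp: pattern_dom_def)
  then show ?thesis by (rule finite_subset) simp
qed

lemma finite_bounded_patterns:
  "finite {a. is_pattern r n c a \<and> (\<forall>j. \<bar>a (r+1) j\<bar> \<le> M)}"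
proof -
  let ?S = "{f :: nat \<times> nat \<Rightarrow> int. \<forall>x. (x \<in> pattern_dom r n \<longrightarrow> f x \<in> {-M..M}) \<and> (x \<notin> pattern_dom r n \<longrightarrow> f x = 0)}"
  have fin: "finite ?S" by (rule finite_set_of_finite_funs) (auto simp: finite_pattern_dom)
  have "{a. is_pattern r n c a \<and> (\<forall>j. \<bar>a (r+1) j\<bar> \<le> M)} \<subseteq> (\<lambda>f i j. f (i,j)) ` ?S"
  proof
    fix a assume "a \<in> {a. is_pattern r n c a \<and> (\<forall>j. \<bar>a (r+1) j\<bar> \<le> M)}"
    then have P: "is_pattern r n c a" and B: "\<And>j. \<bar>a (r+1) j\<bar> \<le> M" by auto
    have "(\<lambda>(i,j). a i j) \<in> ?S"
    proof (clarsimp, intro conjI impI)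
      fix i j assume "(i,j) \<in> pattern_dom r n"
      then have "1 \<le> i" "i \<le> r+1" by (auto simp: pattern_dom_def)
      then have "\<bar>a i j\<bar> \<le> M" using pat_bound[OF P B] by blast
      then show "- M \<le> a i j" "a i j \<le> M" by auto
    next
      fix i j assume "(i,j) \<notin> pattern_dom r n"
      then show "a i j = 0" by (rule pat_out[OF P])
    qed
    then show "a \<in> (\<lambda>f i j. f (i,j)) ` ?S" by (rule rev_image_eqI) simp
  qed
  then show ?thesis using fin by (rule finite_subset[OF _ finite_imageI])
qed

definition Phi :: "(nat \<Rightarrow> int) \<Rightarrow> int \<Rightarrow> int \<Rightarrow> nat \<Rightarrow> (nat \<Rightarrow> nat \<Rightarrow> int) \<Rightarrow> nat \<Rightarrow> nat \<Rightarrow> int" where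
  "Phi D s c n b = (\<lambda>i j. if (i,j) \<notin> pattern_dom (n-1) n then 0 else if j = i-1 then 0
      else if j = i then D i else if j = n+1 then c else b i (j-1) - s)"

definition Psi :: "int \<Rightarrow> nat \<Rightarrow> (nat \<Rightarrow> nat \<Rightarrow> int) \<Rightarrow> nat \<Rightarrow> nat \<Rightarrow> int" where
  "Psi s n a = (\<lambda>i j. if (i,j) \<notin> pattern_dom (n-2) (n-1) then 0 else if j = i-1 then 0
      else a i (j+1) + s)"

definition A_set :: "(nat \<Rightarrow> int) \<Rightarrow> int \<Rightarrow> int \<Rightarrow> nat \<Rightarrow> (nat \<Rightarrow> nat \<Rightarrow> int) set" where
  "A_set D s c n = {a. is_pattern (n-1) n c a \<and> (\<forall>i. 1\<le>i \<and> i\<le>n \<longrightarrow> a i i = D i)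
      \<and> (\<forall>i. 1\<le>i \<and> i\<le>n-1 \<longrightarrow> 0 \<le> a i (i+1) + s)}"

definition B_set :: "int \<Rightarrow> nat \<Rightarrow> (nat \<Rightarrow> nat \<Rightarrow> int) set" where
  "B_set c n = {b. is_pattern (n-2) (n-1) c b \<and> 0 \<le> b (n-1) (n-1) \<and> b (n-1) (n-1) \<le> c}"

lemma Phi_out: "(i,j) \<notin> pattern_dom (n-1) n \<Longrightarrow> Phi D s c n b i j = 0"
  by (simp add: Phi_def)
lemma Phi_left: "1 \<le> i \<Longrightarrow> i \<le> n \<Longrightarrow> Phi D s c n b i (i-1) = 0"
  by (auto simp: Phi_def pattern_dom_def)
lemma Phi_diag: "1 \<le> i \<Longrightarrow> i \<le> n \<Longrightarrow> Phi D s c n b i i = D i"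
  by (auto simp: Phi_def pattern_dom_def)
lemma Phi_right: "1 \<le> i \<Longrightarrow> i \<le> n \<Longrightarrow> Phi D s c n b i (n+1) = c"
  by (auto simp: Phi_def pattern_dom_def)
lemma Phi_mid: "1 \<le> i \<Longrightarrow> i < j \<Longrightarrow> j \<le> n \<Longrightarrow> Phi D s c n b i j = b i (j-1) - s"
  by (auto simp: Phi_def pattern_dom_def)

lemma Phi_left': "Suc 0 \<le> i \<Longrightarrow> i \<le> n \<Longrightarrow> Phi D s c n b i (i - Suc 0) = 0"
  using Phi_left by simp
lemma Phi_right': "Suc 0 \<le> i \<Longrightarrow> i \<le> n \<Longrightarrow> Phi D s c n b i (Suc n) = c"
  using Phi_right by simp

lemma Psi_out: "(i,j) \<notin> pattern_dom (n-2) (n-1) \<Longrightarrow> Psi s n a i j = 0"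
  by (simp add: Psi_def)
lemma Psi_left: "1 \<le> i \<Longrightarrow> i \<le> n-1 \<Longrightarrow> Psi s n a i (i-1) = 0"
  by (auto simp: Psi_def pattern_dom_def)
lemma Psi_mid: "2 \<le> n \<Longrightarrow> 1 \<le> i \<Longrightarrow> i \<le> n-1 \<Longrightarrow> i \<le> j \<Longrightarrow> j \<le> n \<Longrightarrow> Psi s n a i j = a i (j+1) + s"
  by (auto simp: Psi_def pattern_dom_def)

lemma Psi_left': "Suc 0 \<le> i \<Longrightarrow> i \<le> n-1 \<Longrightarrow> Psi s n a i (i - Suc 0) = 0"
  by (auto simp: Psi_def pattern_dom_def)

lemma btw_shift: "btw (x - s) (y - s) (z - s) \<longleftrightarrow> btw x y z"
  by (auto simp: btw_def)

lemma B_diag_nonneg: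
  assumes b: "b \<in> B_set c n" and n: "2 \<le> n" and i: "1 \<le> i" "i \<le> n-1"
  shows "0 \<le> b i i"
  using i(2)
proof (induction rule: inc_induct)
  case base then show ?case using b by (simp add: B_set_def)
next
  case (step k)
  have P: "is_pattern (n-2) (n-1) c b" using b by (simp add: B_set_def)
  have "btw (b (Suc k) k) (b (Suc k) (k+1)) (b (Suc k - 1) k)"
    by (rule pat_btw[OF P]) (use step i n in auto)
  moreover have "b (Suc k) k = 0" using pat_left[OF P, of "Suc k"] step i n by simp
  ultimately show ?case using step(3) by (simp add: btw_def)
qed

locale tr =
  fixes D :: "nat \<Rightarrow> int" and s c :: int and n :: nat
  assumes n2: "2 \<le> n"
    and HD: "\<And>i. 2 \<le> i \<Longrightarrow> i \<le> n \<Longrightarrow> btw 0 (D i) (D (i-1))"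
    and He: "\<And>i. 2 \<le> i \<Longrightarrow> i \<le> n \<Longrightarrow> D i + s \<le> 0"
begin

lemma Phi_in_A:
  assumes b: "b \<in> B_set (c+s) n"
  shows "Phi D s c n b \<in> A_set D s c n"
proof -
  let ?a = "Phi D s c n b"
  have P: "is_pattern (n-2) (n-1) (c+s) b" using b by (simp add: B_set_def)
  have k: "0 \<le> b (n-1) (n-1)" "b (n-1) (n-1) \<le> c + s" using b by (auto simp: B_set_def)
  have dn: "\<And>i. 1 \<le> i \<Longrightarrow> i \<le> n-1 \<Longrightarrow> 0 \<le> b i i" using B_diag_nonneg[OF b n2] by blast
  have bright: "b i n = c + s" if "1 \<le> i" "i \<le> n-1" for i
  proof -
    have "i \<le> n-2+1" using that n2 by linarith
    then show ?thesis using pat_right[OF P, of i] that n2 by (simp add: numeral_2_eq_2)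
  qed
  have inter: "btw (?a i j) (?a i (j+1)) (?a (i-1) j)" if ij: "2 \<le> i" "i \<le> n" "i-1 \<le> j" "j \<le> n" for i j
  proof -
    have i1: "1 \<le> i" "1 \<le> n" "Suc 0 \<le> i" "Suc 0 \<le> n" using ij by auto
    consider "j = i-1" | "j = i" | "i < j" using ij by linarith
    then show ?thesis
    proof cases
      case 1
      then show ?thesis using ij HD[of i] Phi_left[of i n D s c b] Phi_diag[of "i-1" n D s c b] Phi_diag[of i n D s c b] by simp
    next
      case 2
      show ?thesis
      proof (cases "i = n")
        case True
        have "?a i j = D n" using 2 True ij i1 by (simp add: Phi_diag)
        moreover have "?a i (j+1) = c" using 2 True Phi_right[of n n D s c b] n2 by simp
        moreover have "?a (i-1) j = b (n-1) (n-1) - s" using 2 True ij i1 by (simp add: Phi_mid)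
        ultimately show ?thesis using He[of n] k n2 by (simp add: btw_def)
      next
        case False
        have e1: "?a i j = D i" using 2 False ij i1 by (simp add: Phi_diag)
        have e2: "?a i (j+1) = b i i - s" using 2 False ij i1 by (simp add: Phi_mid)
        have e3: "?a (i-1) j = b (i-1) (i-1) - s" using 2 False ij i1 by (simp add: Phi_mid)
        note e = e1 e2 e3
        have "btw (b i (i-1)) (b i (i-1+1)) (b (i-1) (i-1))"
          by (rule pat_btw[OF P]) (use ij False in auto)
        moreover have "b i (i-1) = 0" using pat_left[OF P, of i] ij False by simp
        ultimately have "btw 0 (b i i) (b (i-1) (i-1))" using ij by simp
        then show ?thesis unfolding e using He[of i] ij dn[of i] dn[of "i-1"] False
          by (auto simp: btw_def)
      qed
    next
      case 3
      have e: "?a i j = b i (j-1) - s" "?a i (j+1) = b i (j-1+1) - s" "?a (i-1) j = b (i-1) (j-1) - s"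
      proof -
        show "?a i j = b i (j-1) - s" using 3 ij i1 by (simp add: Phi_mid)
        show "?a (i-1) j = b (i-1) (j-1) - s" using 3 ij i1 by (simp add: Phi_mid)
        show "?a i (j+1) = b i (j-1+1) - s"
        proof (cases "j = n")
          case True then show ?thesis using ij 3 i1 bright[of i] by (simp add: Phi_right')
        next
          case False then show ?thesis using ij 3 i1 by (simp add: Phi_mid)
        qed
      qed
      have "btw (b i (j-1)) (b i (j-1+1)) (b (i-1) (j-1))"
        by (rule pat_btw[OF P]) (use ij 3 in auto)
      then show ?thesis unfolding e btw_shift .
    qed
  qed
  have "is_pattern (n-1) n c ?a"
    unfolding is_pattern_iff
  proof (intro conjI allI impI)
    show "n - 1 \<le> n" by simp
  next
    fix i j assume "(i,j) \<notin> pattern_dom (n-1) n" then show "?a i j = 0" by (rule Phi_out)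
  next
    fix i assume "1 \<le> i \<and> i \<le> n-1+1" then show "?a i (i-1) = 0" "?a i (n+1) = c"
      using n2 by (auto simp: Phi_left' Phi_right')
  next
    fix i j assume "2 \<le> i \<and> i \<le> n-1+1 \<and> i-1 \<le> j \<and> j \<le> n"
    then show "btw (?a i j) (?a i (j+1)) (?a (i-1) j)" using inter n2 by simp
  qed
  moreover have "\<forall>i. 1\<le>i \<and> i\<le>n \<longrightarrow> ?a i i = D i" by (simp add: Phi_diag)
  moreover have "\<forall>i. 1\<le>i \<and> i\<le>n-1 \<longrightarrow> 0 \<le> ?a i (i+1) + s"
    using dn by (auto simp: Phi_mid)
  ultimately show ?thesis by (simp add: A_set_def)
qed

end

context tr
begin

lemma Psi_in_B:
  assumes a: "a \<in> A_set D s c n"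
  shows "Psi s n a \<in> B_set (c+s) n"
proof -
  let ?b = "Psi s n a"
  have P: "is_pattern (n-1) n c a" and diag: "\<And>i. 1 \<le> i \<Longrightarrow> i \<le> n \<Longrightarrow> a i i = D i"
    and nn: "\<And>i. 1 \<le> i \<Longrightarrow> i \<le> n-1 \<Longrightarrow> 0 \<le> a i (i+1) + s"
    using a by (auto simp: A_set_def)
  have n1: "n - 1 + 1 = n" "n - 2 + 1 = n - 1" using n2 by auto
  have inter: "btw (?b i j) (?b i (j+1)) (?b (i-1) j)" if ij: "2 \<le> i" "i \<le> n-1" "i-1 \<le> j" "j \<le> n-1" for i j
  proof (cases "j = i-1")
    case True
    have e1: "?b i j = 0" using True ij Psi_left'[of i n s a] by simp
    have e2: "?b i (j+1) = a i (i+1) + s" using True ij n2 by (simp add: Psi_mid)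
    have e3: "?b (i-1) j = a (i-1) i + s" using True ij n2 by (simp add: Psi_mid)
    have "btw (a i i) (a i (i+1)) (a (i-1) i)" by (rule pat_btw[OF P]) (use ij in auto)
    then have "btw (D i) (a i (i+1)) (a (i-1) i)" using diag[of i] ij by simp
    moreover have "0 \<le> a (i-1) i + s"
    proof -
      have "i-1+1 = i" using ij by simp
      then show ?thesis using nn[of "i-1"] ij by simp
    qed
    moreover have "D i + s \<le> 0" by (rule He) (use ij in auto)
    ultimately show ?thesis unfolding e1 e2 e3 using nn[of i] ij
      by (auto simp: btw_def)
  next
    case False
    have e1: "?b i j = a i (j+1) + s" using False ij n2 by (simp add: Psi_mid)
    have e2: "?b i (j+1) = a i (j+1+1) + s" using False ij n2 by (simp add: Psi_mid)
    have e3: "?b (i-1) j = a (i-1) (j+1) + s" using False ij n2 by (simp add: Psi_mid)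
    have "btw (a i (j+1)) (a i (j+1+1)) (a (i-1) (j+1))" by (rule pat_btw[OF P]) (use ij False in auto)
    then show ?thesis unfolding e1 e2 e3 by (simp add: btw_def)
  qed
  have "is_pattern (n-2) (n-1) (c+s) ?b"
    unfolding is_pattern_iff
  proof (intro conjI allI impI)
    show "n - 2 \<le> n - 1" by simp
  next
    fix i j assume "(i,j) \<notin> pattern_dom (n-2) (n-1)" then show "?b i j = 0" by (rule Psi_out)
  next
    fix i assume i: "1 \<le> i \<and> i \<le> n-2+1"
    then show "?b i (i-1) = 0" using n2 by (auto simp: Psi_left')
    have i': "1 \<le> i" "i \<le> n-1" "i \<le> n" using i n1 by auto
    have "?b i (n-1+1) = a i (n+1) + s" using Psi_mid[OF n2 i'(1) i'(2) i'(3), of s a] n1 by simp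
    also have "\<dots> = c + s" using pat_right[OF P, of i] i n1 by simp
    finally show "?b i (n-1+1) = c + s" .
  next
    fix i j assume "2 \<le> i \<and> i \<le> n-2+1 \<and> i-1 \<le> j \<and> j \<le> n-1"
    then show "btw (?b i j) (?b i (j+1)) (?b (i-1) j)" using inter n1 by simp
  qed
  moreover have "?b (n-1) (n-1) = a (n-1) n + s" using n2 by (simp add: Psi_mid)
  moreover have nnb: "0 \<le> a (n-1) n + s" using nn[of "n-1"] n2 by simp
  moreover have "a (n-1) n + s \<le> c + s"
  proof -
    have "btw (a n n) (a n (n+1)) (a (n-1) n)" by (rule pat_btw[OF P]) (use n2 in auto)
    moreover have "a n n = D n" "a n (n+1) = c" using diag[of n] pat_right[OF P, of n] n2 by auto
    ultimately show ?thesis using He[of n] nnb n2 by (auto simp: btw_def)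
  qed
  ultimately show ?thesis by (simp add: B_set_def)
qed

lemma Phi_Psi:
  assumes a: "a \<in> A_set D s c n"
  shows "Phi D s c n (Psi s n a) = a"
proof (intro ext)
  fix i j
  have P: "is_pattern (n-1) n c a" and diag: "\<And>i. 1 \<le> i \<Longrightarrow> i \<le> n \<Longrightarrow> a i i = D i"
    using a by (auto simp: A_set_def)
  show "Phi D s c n (Psi s n a) i j = a i j"
  proof (cases "(i,j) \<in> pattern_dom (n-1) n")
    case False then show ?thesis using pat_out[OF P False] by (simp add: Phi_out)
  next
    case True
    then have ij: "1 \<le> i" "i \<le> n" "i - 1 \<le> j" "j \<le> n+1" using n2 by (auto simp: pattern_dom_def)
    consider "j = i-1" | "j = i" | "j = n+1" | "i < j" "j \<le> n" using ij by linarith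
    then show ?thesis
    proof cases
      case 1 then show ?thesis using pat_left[OF P, of i] ij n2 by (simp add: Phi_left')
    next
      case 2 then show ?thesis using diag[of i] ij by (simp add: Phi_diag)
    next
      case 3 then show ?thesis using pat_right[OF P, of i] ij n2 by (simp add: Phi_right')
    next
      case 4 then show ?thesis using ij n2 by (simp add: Phi_mid Psi_mid)
    qed
  qed
qed

lemma B_right: "b \<in> B_set (c+s) n \<Longrightarrow> 1 \<le> i \<Longrightarrow> i \<le> n-1 \<Longrightarrow> b i n = c + s"
proof -
  assume b: "b \<in> B_set (c+s) n" and i: "1 \<le> i" "i \<le> n-1"
  have P: "is_pattern (n-2) (n-1) (c+s) b" using b by (simp add: B_set_def)
  have "i \<le> n-2+1" using i n2 by linarith
  then show ?thesis using pat_right[OF P, of i] i n2 by (simp add: numeral_2_eq_2)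
qed

lemma Psi_Phi:
  assumes b: "b \<in> B_set (c+s) n"
  shows "Psi s n (Phi D s c n b) = b"
proof (intro ext)
  fix i j
  have P: "is_pattern (n-2) (n-1) (c+s) b" using b by (simp add: B_set_def)
  show "Psi s n (Phi D s c n b) i j = b i j"
  proof (cases "(i,j) \<in> pattern_dom (n-2) (n-1)")
    case False then show ?thesis using pat_out[OF P False] by (simp add: Psi_out)
  next
    case True
    then have ij: "1 \<le> i" "i \<le> n-1" "i - 1 \<le> j" "j \<le> n" using n2 by (auto simp: pattern_dom_def)
    consider "j = i-1" | "i \<le> j" "j = n" | "i \<le> j" "j < n" using ij by linarith
    then show ?thesis
    proof cases
      case 1
      have "i \<le> n-2+1" using ij n2 by linarith
      then show ?thesis using pat_left[OF P, of i] ij n2 1 by (simp add: Psi_left')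
    next
      case 2 then show ?thesis using ij n2 B_right[OF b, of i] by (simp add: Phi_right' Psi_mid)
    next
      case 3 then show ?thesis using ij n2 by (simp add: Phi_mid Psi_mid)
    qed
  qed
qed

lemma sum_transfer:
  "(\<Sum>a\<in>{a\<in>A_set D s c n. Q a}. f a) = (\<Sum>b\<in>{b\<in>B_set (c+s) n. Q (Phi D s c n b)}. f (Phi D s c n b))"
proof (rule sum.reindex_bij_witness[of _ "Phi D s c n" "Psi s n"])
  fix a assume "a \<in> {a\<in>A_set D s c n. Q a}"
  then show "Phi D s c n (Psi s n a) = a" "Psi s n a \<in> {b\<in>B_set (c+s) n. Q (Phi D s c n b)}"
    "f (Phi D s c n (Psi s n a)) = f a"
    using Phi_Psi Psi_in_B by auto
next
  fix b assume "b \<in> {b\<in>B_set (c+s) n. Q (Phi D s c n b)}"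
  then show "Psi s n (Phi D s c n b) = b" "Phi D s c n b \<in> {a\<in>A_set D s c n. Q a}"
    using Psi_Phi Phi_in_A by auto
qed

end

lemma finite_inversions: "finite (inversions r n a)"
proof -
  have "inversions r n a \<subseteq> {0..r+1} \<times> {0..n}" by (auto simp: inversions_def)
  then show ?thesis by (rule finite_subset) simp
qed

context tr
begin

lemma inv_Phi:
  assumes b: "b \<in> B_set (c+s) n"
  shows "card (inversions (n-1) n (Phi D s c n b)) = card {i\<in>{2..n}. D i < 0} + card (inversions (n-2) (n-1) b)"
proof -
  let ?a = "Phi D s c n b"
  let ?X = "(\<lambda>i. (i, i-1)) ` {i\<in>{2..n}. D i < 0}"
  let ?Y = "(\<lambda>(i,j). (i, Suc j)) ` inversions (n-2) (n-1) b"
  have P: "is_pattern (n-2) (n-1) (c+s) b" using b by (simp add: B_set_def)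
  have k: "0 \<le> b (n-1) (n-1)" "b (n-1) (n-1) \<le> c + s" using b by (auto simp: B_set_def)
  have dn: "\<And>i. 1 \<le> i \<Longrightarrow> i \<le> n-1 \<Longrightarrow> 0 \<le> b i i" using B_diag_nonneg[OF b n2] by blast
  have He': "\<And>i. 2 \<le> i \<Longrightarrow> i \<le> n \<Longrightarrow> D i + s \<le> 0" by (rule He)
  have eq: "inversions (n-1) n ?a = ?X \<union> ?Y"
  proof (intro equalityI subsetI)
    fix x assume x: "x \<in> inversions (n-1) n ?a"
    then obtain i j where xij: "x = (i,j)" and ij: "2 \<le> i" "i \<le> n" "i-1 \<le> j" "j \<le> n"
      and gt: "?a i j > ?a i (j+1)" using n2 by (auto simp: inversions_def)
    have i1: "Suc 0 \<le> i" using ij by simp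
    consider "j = i-1" | "j = i" | "i < j" using ij by linarith
    then show "x \<in> ?X \<union> ?Y"
    proof cases
      case 1
      then have "D i < 0" using gt ij i1 by (simp add: Phi_left' Phi_diag)
      then show ?thesis using xij 1 ij by auto
    next
      case 2
      show ?thesis
      proof (cases "i = n")
        case True
        then have "D n > c" using gt 2 i1 by (simp add: Phi_diag Phi_right')
        then show ?thesis using He'[of n] n2 k by simp
      next
        case False
        then have "D i > b i i - s" using gt 2 i1 ij by (simp add: Phi_diag Phi_mid)
        moreover have "0 \<le> b i i" by (rule dn) (use ij False in auto)
        moreover have "D i + s \<le> 0" by (rule He') (use ij in auto)
        ultimately show ?thesis by simp
      qed
    next
      case 3
      have e1: "?a i j = b i (j-1) - s" using 3 ij by (simp add: Phi_mid)
      have e2: "?a i (j+1) = b i (j-1+1) - s"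
      proof (cases "j = n")
        case True then show ?thesis using ij 3 B_right[OF b, of i] by (simp add: Phi_right')
      next
        case False then show ?thesis using ij 3 by (simp add: Phi_mid)
      qed
      have "(i, j-1) \<in> inversions (n-2) (n-1) b"
        using gt e1 e2 ij 3 n2 by (auto simp: inversions_def)
      moreover have "x = (\<lambda>(i,j). (i, Suc j)) (i, j-1)" using xij 3 by simp
      ultimately show ?thesis by blast
    qed
  next
    fix x assume "x \<in> ?X \<union> ?Y"
    then show "x \<in> inversions (n-1) n ?a"
    proof
      assume "x \<in> ?X"
      then obtain i where x: "x = (i, i-1)" "2 \<le> i" "i \<le> n" "D i < 0" by auto
      then show ?thesis by (auto simp: inversions_def Phi_left' Phi_diag)
    next
      assume "x \<in> ?Y"
      then obtain i j where x: "x = (i, Suc j)" and ij: "(i,j) \<in> inversions (n-2) (n-1) b" by auto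
      then have ij': "2 \<le> i" "i \<le> n-1" "i-1 \<le> j" "j \<le> n-1" "b i j > b i (j+1)"
        using n2 by (auto simp: inversions_def)
      have "j \<noteq> i - 1"
      proof
        assume "j = i-1"
        then have "b i j = 0" using pat_left[OF P, of i] ij' n2 by simp
        moreover have "0 \<le> b i (j+1)" using dn[of i] ij' \<open>j = i-1\<close> by simp
        ultimately show False using ij' by simp
      qed
      then have ji: "i \<le> j" using ij' by linarith
      have e1: "?a i (Suc j) = b i j - s" using ji ij' by (simp add: Phi_mid)
      have e2: "?a i (Suc j + 1) = b i (j+1) - s"
      proof (cases "j = n-1")
        case True then show ?thesis using ij' ji B_right[OF b, of i] n2 by (simp add: Phi_right')
      next
        case False then show ?thesis using ij' ji by (simp add: Phi_mid)
      qed
      show ?thesis using x e1 e2 ij' ji n2 by (auto simp: inversions_def)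
    qed
  qed
  have disj: "?X \<inter> ?Y = {}"
  proof (intro equals0I)
    fix x assume "x \<in> ?X \<inter> ?Y"
    then obtain i where xi: "x = (i, i-1)" "2 \<le> i" by auto
    from \<open>x \<in> ?X \<inter> ?Y\<close> obtain i' j where xj: "x = (i', Suc j)" "(i',j) \<in> inversions (n-2) (n-1) b"
      by auto
    from xi xj show False by (auto simp: inversions_def)
  qed
  have "card (?X \<union> ?Y) = card ?X + card ?Y"
    by (rule card_Un_disjoint) (use disj finite_inversions in auto)
  moreover have "card ?X = card {i\<in>{2..n}. D i < 0}" by (rule card_image) (auto simp: inj_on_def)
  moreover have "card ?Y = card (inversions (n-2) (n-1) b)" by (rule card_image) (auto simp: inj_on_def)
  ultimately show ?thesis using eq by simp
qed

lemma row_Phi: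
  assumes i: "1 \<le> i" "i \<le> n"
  shows "(\<Sum>j=i..n. Phi D s c n b i j) = D i + (\<Sum>j=i..n-1. b i j) - s * int (n - i)"
proof -
  let ?a = "Phi D s c n b"
  have "(\<Sum>j=i..n. ?a i j) = ?a i i + (\<Sum>j=Suc i..n. ?a i j)"
    using i by (simp add: sum.atLeast_Suc_atMost)
  also have "(\<Sum>j=Suc i..n. ?a i j) = (\<Sum>j=Suc i..Suc (n-1). ?a i j)" using n2 by simp
  also have "\<dots> = (\<Sum>j=i..n-1. ?a i (Suc j))" by (rule sum.shift_bounds_cl_Suc_ivl)
  also have "\<dots> = (\<Sum>j=i..n-1. b i j - s)"
    by (rule sum.cong) (use i n2 in \<open>auto simp: Phi_mid\<close>)
  also have "\<dots> = (\<Sum>j=i..n-1. b i j) - s * int (n - i)"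
    using i n2 by (simp add: sum_subtractf)
  finally show ?thesis using i by (simp add: Phi_diag)
qed

lemma norm_Phi:
  "pattern_norm (n-1) n (Phi D s c n b) = pattern_norm (n-2) (n-1) b + (\<Sum>i=1..n. D i) - s * (\<Sum>i=1..n. int (n - i))"
proof -
  have n1: "n - 1 + 1 = n" "n - 2 + 1 = n - 1" using n2 by auto
  have "pattern_norm (n-1) n (Phi D s c n b) = (\<Sum>i=1..n. \<Sum>j=i..n. Phi D s c n b i j)"
    unfolding pattern_norm_def n1 ..
  also have "\<dots> = (\<Sum>i=1..n. D i + (\<Sum>j=i..n-1. b i j) - s * int (n - i))"
    by (rule sum.cong) (auto simp: row_Phi)
  also have "\<dots> = (\<Sum>i=1..n. D i) + (\<Sum>i=1..n. \<Sum>j=i..n-1. b i j) - s * (\<Sum>i=1..n. int (n - i))"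
    by (simp only: sum.distrib sum_subtractf flip: sum_distrib_left)
  also have "(\<Sum>i=1..n. \<Sum>j=i..n-1. b i j) = (\<Sum>i=1..n-1. \<Sum>j=i..n-1. b i j)"
  proof -
    have "{1..n} = insert n {1..n-1}" using n2 by auto
    then show ?thesis using n2 by simp
  qed
  also have "\<dots> = pattern_norm (n-2) (n-1) b" unfolding pattern_norm_def n1 ..
  finally show ?thesis by simp
qed

lemma par_Phi:
  "card {j\<in>{1..n}. odd (Phi D s c n b 1 j)} = (if odd (D 1) then 1 else 0) + card {j\<in>{1..n-1}. odd (b 1 j - s)}"
proof -
  let ?a = "Phi D s c n b"
  let ?L = "{j\<in>{1::nat}. odd (D 1)}"
  let ?R = "Suc ` {j\<in>{1..n-1}. odd (b 1 j - s)}"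
  have eq: "{j\<in>{1..n}. odd (?a 1 j)} = ?L \<union> ?R"
  proof (intro equalityI subsetI)
    fix j assume j: "j \<in> {j\<in>{1..n}. odd (?a 1 j)}"
    show "j \<in> ?L \<union> ?R"
    proof (cases "j = 1")
      case True then show ?thesis using j n2 by (simp add: Phi_diag)
    next
      case False
      then have "odd (b 1 (j-1) - s)" "j - 1 \<in> {1..n-1}" using j by (auto simp: Phi_mid)
      then have "Suc (j-1) \<in> ?R" by blast
      then show ?thesis using False j by simp
    qed
  next
    fix j assume "j \<in> ?L \<union> ?R"
    then show "j \<in> {j\<in>{1..n}. odd (?a 1 j)}"
      using n2 by (auto simp: Phi_diag Phi_mid)
  qed
  have "card (?L \<union> ?R) = card ?L + card ?R" by (rule card_Un_disjoint) auto
  moreover have "card ?R = card {j\<in>{1..n-1}. odd (b 1 j - s)}" by (rule card_image) auto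
  moreover have "card ?L = (if odd (D 1) then 1 else 0)" by auto
  ultimately show ?thesis using eq by simp
qed

end

lemma diag_step:
  assumes P: "is_pattern (n-1) n c a" and i: "1 \<le> i" "i \<le> n-1"
  shows "btw 0 (a (Suc i) (Suc i)) (a i i)"
proof -
  have "btw (a (Suc i) i) (a (Suc i) (i+1)) (a (Suc i - 1) i)"
    by (rule pat_btw[OF P]) (use i in auto)
  moreover have "a (Suc i) (Suc i - 1) = 0" by (rule pat_left[OF P]) (use i in auto)
  ultimately show ?thesis by simp
qed

lemma col_step:
  assumes P: "is_pattern (n-1) n c a" and i: "1 \<le> i" "i+1 \<le> n-1"
  shows "btw (a (Suc i) (Suc i)) (a (Suc i) (Suc (Suc i))) (a i (Suc i))"
proof -
  have "btw (a (Suc i) (Suc i)) (a (Suc i) (Suc i+1)) (a (Suc i - 1) (Suc i))"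
    by (rule pat_btw[OF P]) (use i in auto)
  then show ?thesis by simp
qed

lemma col_last:
  assumes P: "is_pattern (n-1) n c a" and n: "2 \<le> n"
  shows "btw (a n n) c (a (n-1) n)"
proof -
  have "btw (a n n) (a n (n+1)) (a (n - 1) n)"
    by (rule pat_btw[OF P]) (use n in auto)
  moreover have "a n (n+1) = c" by (rule pat_right[OF P]) (use n in auto)
  ultimately show ?thesis by simp
qed

lemma diag_nonneg:
  assumes P: "is_pattern (n-1) n c a" and n: "2 \<le> n" and k: "0 \<le> a n n"
    and i: "1 \<le> i" "i \<le> n"
  shows "0 \<le> a i i \<and> a i i \<le> a n n"
  using i(2)
proof (induction rule: inc_induct)
  case base then show ?case using k by simp
next
  case (step m)
  have "btw 0 (a (Suc m) (Suc m)) (a m m)" by (rule diag_step[OF P]) (use step i in auto)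
  then show ?case using step(3) by (auto simp: btw_def)
qed

lemma diag_neg:
  assumes P: "is_pattern (n-1) n c a" and n: "2 \<le> n" and k: "a n n < 0"
    and i: "1 \<le> i" "i \<le> n"
  shows "a i i < 0 \<and> a n n + int (n - i) \<le> a i i"
  using i(2)
proof (induction rule: inc_induct)
  case base then show ?case using k by simp
next
  case (step m)
  have "btw 0 (a (Suc m) (Suc m)) (a m m)" by (rule diag_step[OF P]) (use step i in auto)
  moreover have "int (n - m) = int (n - Suc m) + 1" using step by simp
  ultimately show ?case using step(3) by (auto simp: btw_def)
qed

lemma diag_neg_up:
  assumes P: "is_pattern (n-1) n c a" and n: "2 \<le> n" and k: "a n n < 0"
    and top: "a 1 1 \<le> -1 - t" and i: "1 \<le> i" "i \<le> n"
  shows "a i i \<le> - int i - t"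
  using i
proof (induction i rule: dec_induct)
  case base then show ?case using top by simp
next
  case (step m)
  have "btw 0 (a (Suc m) (Suc m)) (a m m)" by (rule diag_step[OF P]) (use step i in auto)
  moreover have "a (Suc m) (Suc m) < 0" using diag_neg[OF P n k, of "Suc m"] step by auto
  moreover have "a m m \<le> - int m - t" using step by simp
  ultimately show ?case by (auto simp: btw_def)
qed

lemma card_all:
  assumes "card {j\<in>{1..n::nat}. Q j} = n"
  shows "\<forall>j\<in>{1..n}. Q j"
proof -
  have "{j\<in>{1..n}. Q j} = {1..n}"
    by (rule card_subset_eq) (use assms in auto)
  then show ?thesis by blast
qed

lemma card_none:
  assumes "card {j\<in>{1..n::nat}. Q j} = 0"
  shows "\<forall>j\<in>{1..n}. \<not> Q j"
  using assms by auto

lemma col_stair: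
  assumes P: "is_pattern (n-1) n c a" and n: "2 \<le> n" and c: "0 \<le> c" and t: "0 \<le> t"
    and diag: "\<And>i. 1 \<le> i \<Longrightarrow> i \<le> n \<Longrightarrow> a i i = - int i - t"
  shows "\<And>i. 1 \<le> i \<Longrightarrow> i \<le> n-1 \<Longrightarrow> -2 - t \<le> a i (Suc i)"
proof -
  have L: "- int i - 1 - t \<le> a i (Suc i)" if i: "1 \<le> i" "i \<le> n-1" for i
    using i(2)
  proof (induction rule: inc_induct)
    case base
    have "btw (a n n) c (a (n-1) n)" by (rule col_last[OF P n])
    then show ?case using diag[of n] n c t by (auto simp: btw_def)
  next
    case (step m)
    have "btw (a (Suc m) (Suc m)) (a (Suc m) (Suc (Suc m))) (a m (Suc m))"
      by (rule col_step[OF P]) (use step i in auto)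
    then show ?case using diag[of "Suc m"] step by (auto simp: btw_def)
  qed
  have R: "- int (Suc i) - t \<le> a (Suc i) (Suc (Suc i))" if i: "1 \<le> i" "i+1 \<le> n-1" for i
  proof -
    have "btw (a (Suc i) (Suc i)) (a (Suc i) (Suc (Suc i))) (a i (Suc i))"
      by (rule col_step[OF P]) (use i in auto)
    moreover have "- int (Suc i) - 1 - t \<le> a (Suc i) (Suc (Suc i))" using L[of "Suc i"] i by simp
    ultimately show ?thesis using diag[of "Suc i"] i n by (auto simp: btw_def)
  qed
  have mono: "a i (Suc i) \<le> a (Suc i) (Suc (Suc i))" if i: "1 \<le> i" "i+1 \<le> n-1" for i
  proof -
    have "btw (a (Suc i) (Suc i)) (a (Suc i) (Suc (Suc i))) (a i (Suc i))"
      by (rule col_step[OF P]) (use i in auto)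
    then show ?thesis using R[OF i] diag[of "Suc i"] i n by (auto simp: btw_def)
  qed
  have first: "-2 - t \<le> a 1 2" using L[of 1] n by (simp add: numeral_2_eq_2)
  fix i assume i: "1 \<le> i" "i \<le> n-1"
  then show "-2 - t \<le> a i (Suc i)"
  proof (induction i rule: dec_induct)
    case base then show ?case using first by (simp add: numeral_2_eq_2)
  next
    case (step m)
    then show ?case using mono[of m] by simp
  qed
qed

lemma col_flat:
  assumes P: "is_pattern (n-1) n c a" and n: "2 \<le> n" and c: "e - 1 \<le> c"
    and diag: "\<And>i. 1 \<le> i \<Longrightarrow> i \<le> n \<Longrightarrow> a i i = e"
  shows "\<And>i. 1 \<le> i \<Longrightarrow> i \<le> n-1 \<Longrightarrow> e \<le> a i (Suc i)"
proof -
  fix i assume i: "1 \<le> i" "i \<le> n-1"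
  show "e \<le> a i (Suc i)"
    using i(2)
  proof (induction rule: inc_induct)
    case base
    have "btw (a n n) c (a (n-1) n)" by (rule col_last[OF P n])
    then show ?case using diag[of n] n c by (auto simp: btw_def)
  next
    case (step m)
    have "btw (a (Suc m) (Suc m)) (a (Suc m) (Suc (Suc m))) (a m (Suc m))"
      by (rule col_step[OF P]) (use step i in auto)
    then show ?case using diag[of "Suc m"] step by (auto simp: btw_def)
  qed
qed

lemma PW_b:
  assumes n: "2 \<le> n"
  shows "patterns_with (n-2) (n-1) c' p' [k] =
    {b. is_pattern (n-2) (n-1) c' b \<and> b (n-1) (n-1) = k \<and> card {j\<in>{1..n-1}. odd (b 1 j)} = p'}"
proof -
  obtain m where m: "n = m + 2" using n by (metis add.commute le_Suc_ex)
  show ?thesis unfolding patterns_with_def m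
    by (auto simp: numeral_2_eq_2)
qed

lemma PW_a:
  assumes n: "2 \<le> n"
  shows "patterns_with (n-1) n c p [k] =
    {a. is_pattern (n-1) n c a \<and> a n n = k \<and> card {j\<in>{1..n}. odd (a 1 j)} = p}"
proof -
  obtain m where m: "n = m + 1" using n by (metis add.commute le_Suc_ex one_le_numeral le_trans)
  show ?thesis unfolding patterns_with_def m
    by auto
qed

lemma finite_PW_b:
  assumes n: "2 \<le> n"
  shows "finite {b. is_pattern (n-2) (n-1) c' b \<and> b (n-1) (n-1) = k \<and> card {j\<in>{1..n-1}. odd (b 1 j)} = p'}"
proof -
  let ?M = "max \<bar>k\<bar> \<bar>c'\<bar>"
  have "{b. is_pattern (n-2) (n-1) c' b \<and> b (n-1) (n-1) = k \<and> card {j\<in>{1..n-1}. odd (b 1 j)} = p'}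
     \<subseteq> {b. is_pattern (n-2) (n-1) c' b \<and> (\<forall>j. \<bar>b (n-2+1) j\<bar> \<le> ?M)}"
  proof (intro subsetI CollectI conjI allI)
    fix b j assume "b \<in> {b. is_pattern (n-2) (n-1) c' b \<and> b (n-1) (n-1) = k \<and> card {j\<in>{1..n-1}. odd (b 1 j)} = p'}"
    then have P: "is_pattern (n-2) (n-1) c' b" and k: "b (n-1) (n-1) = k" by auto
    then show "is_pattern (n-2) (n-1) c' b" by simp
    have r: "n-2+1 = n-1" using n by simp
    consider "j = n-2" | "j = n-1" | "j = n" | "(n-1, j) \<notin> pattern_dom (n-2) (n-1)"
      using n by (fastforce simp: pattern_dom_def)
    then show "\<bar>b (n - 2 + 1) j\<bar> \<le> ?M"
    proof cases
      case 1
      have "b (n-1) (n-1-1) = 0" by (rule pat_left[OF P]) (use n in auto)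
      moreover have "n - 1 - 1 = n - 2" by simp
      ultimately show ?thesis using 1 r by (simp add: le_max_iff_disj)
    next
      case 2 then show ?thesis using r k by simp
    next
      case 3
      have "b (n-1) (n-1+1) = c'" by (rule pat_right[OF P]) (use n in auto)
      then show ?thesis using 3 r n by simp
    next
      case 4 then show ?thesis using pat_out[OF P 4] r by (simp add: le_max_iff_disj)
    qed
  qed
  then show ?thesis by (rule finite_subset) (rule finite_bounded_patterns)
qed

definition wt :: "'a::field \<Rightarrow> nat \<Rightarrow> nat \<Rightarrow> (nat \<Rightarrow> nat \<Rightarrow> int) \<Rightarrow> 'a" where
  "wt q r n a = of_int (pattern_sgn r n a) * q powi (pattern_norm r n a)"

lemma G_eq:
  fixes q :: "'a::field"
  assumes q: "q \<noteq> 0" and n: "2 \<le> n"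
  shows "Gq q (n-1) c' p' = (\<Sum>b\<in>{b\<in>B_set c' n. card {j\<in>{1..n-1}. odd (b 1 j)} = p'}. wt q (n-2) (n-1) b)"
proof -
  let ?A = "\<lambda>k. {b. is_pattern (n-2) (n-1) c' b \<and> b (n-1) (n-1) = k \<and> card {j\<in>{1..n-1}. odd (b 1 j)} = p'}"
  have m: "n - 1 - 1 = n - 2" by simp
  have "Gq q (n-1) c' p' = (\<Sum>k\<in>{0..c'}. Fq q (n-2) (n-1) c' p' [k] * q powi k)"
    unfolding Gq_def m ..
  also have "\<dots> = (\<Sum>k\<in>{0..c'}. sum (wt q (n-2) (n-1)) (?A k))"
  proof (rule sum.cong[OF refl])
    fix k
    have "Fq q (n-2) (n-1) c' p' [k] * q powi k = (q powi (-k) * q powi k) * sum (wt q (n-2) (n-1)) (?A k)"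
      unfolding Fq_def PW_b[OF n] wt_def by simp
    also have "q powi (-k) * q powi k = 1" using q by (simp add: power_int_minus)
    finally show "Fq q (n-2) (n-1) c' p' [k] * q powi k = sum (wt q (n-2) (n-1)) (?A k)" by simp
  qed
  also have "\<dots> = sum (wt q (n-2) (n-1)) (\<Union>(?A ` {0..c'}))"
    by (rule sum.UNION_disjoint[symmetric]) (use finite_PW_b[OF n] in auto)
  also have "\<Union>(?A ` {0..c'}) = {b\<in>B_set c' n. card {j\<in>{1..n-1}. odd (b 1 j)} = p'}"
    by (auto simp: B_set_def)
  finally show ?thesis .
qed

context tr
begin

lemma transfer_main:
  fixes q :: "'a::field"
  assumes q: "q \<noteq> 0"
    and PWa: "{a. is_pattern (n-1) n c a \<and> a n n = D n \<and> card {j\<in>{1..n}. odd (a 1 j)} = p}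
        = {a\<in>A_set D s c n. card {j\<in>{1..n}. odd (a 1 j)} = p}"
    and par: "\<And>b. b \<in> B_set (c+s) n \<Longrightarrow>
        (card {j\<in>{1..n}. odd (Phi D s c n b 1 j)} = p) \<longleftrightarrow> (card {j\<in>{1..n-1}. odd (b 1 j)} = p')"
  shows "Fq q (n-1) n c p [D n] = (-1) ^ card {i\<in>{2..n}. D i < 0}
      * q powi ((\<Sum>i=1..n. D i) - s * (\<Sum>i=1..n. int (n - i)) - D n) * Gq q (n-1) (c+s) p'"
proof -
  let ?N = "card {i\<in>{2..n}. D i < 0}"
  let ?E = "(\<Sum>i=1..n. D i) - s * (\<Sum>i=1..n. int (n - i))"
  have "Fq q (n-1) n c p [D n] = q powi (- D n) * (\<Sum>a\<in>{a\<in>A_set D s c n. card {j\<in>{1..n}. odd (a 1 j)} = p}. wt q (n-1) n a)"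
    unfolding Fq_def PW_a[OF n2] PWa wt_def by simp
  also have "(\<Sum>a\<in>{a\<in>A_set D s c n. card {j\<in>{1..n}. odd (a 1 j)} = p}. wt q (n-1) n a)
      = (\<Sum>b\<in>{b\<in>B_set (c+s) n. card {j\<in>{1..n}. odd (Phi D s c n b 1 j)} = p}. wt q (n-1) n (Phi D s c n b))"
    by (rule sum_transfer)
  also have "\<dots> = (\<Sum>b\<in>{b\<in>B_set (c+s) n. card {j\<in>{1..n-1}. odd (b 1 j)} = p'}. (-1) ^ ?N * q powi ?E * wt q (n-2) (n-1) b)"
  proof (rule sum.cong)
    show "{b\<in>B_set (c+s) n. card {j\<in>{1..n}. odd (Phi D s c n b 1 j)} = p} = {b\<in>B_set (c+s) n. card {j\<in>{1..n-1}. odd (b 1 j)} = p'}"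
      using par by blast
  next
    fix b assume "b \<in> {b\<in>B_set (c+s) n. card {j\<in>{1..n-1}. odd (b 1 j)} = p'}"
    then have b: "b \<in> B_set (c+s) n" by simp
    have "wt q (n-1) n (Phi D s c n b) = of_int ((-1) ^ (?N + card (inversions (n-2) (n-1) b)))
        * q powi (pattern_norm (n-2) (n-1) b + ?E)"
      unfolding wt_def pattern_sgn_def inv_Phi[OF b] norm_Phi by (simp add: algebra_simps)
    also have "\<dots> = (-1) ^ ?N * q powi ?E * wt q (n-2) (n-1) b"
      unfolding wt_def pattern_sgn_def using q by (simp add: power_add power_int_add)
    finally show "wt q (n-1) n (Phi D s c n b) = (-1) ^ ?N * q powi ?E * wt q (n-2) (n-1) b" .
  qed
  also have "\<dots> = (-1) ^ ?N * q powi ?E * Gq q (n-1) (c+s) p'"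
    unfolding G_eq[OF q n2] by (simp add: sum_distrib_left)
  finally have "Fq q (n-1) n c p [D n] = q powi (- D n) * ((-1) ^ ?N * q powi ?E * Gq q (n-1) (c+s) p')" .
  also have "\<dots> = (-1) ^ ?N * (q powi ?E * q powi (- D n)) * Gq q (n-1) (c+s) p'" by (simp add: algebra_simps)
  also have "q powi ?E * q powi (- D n) = q powi (?E - D n)" using q by (simp add: power_int_add[symmetric])
  finally show ?thesis by simp
qed

end

lemma sum_int_id: "2 * (\<Sum>i=1..n. int i) = int n * (int n + 1)"
  by (induction n) (auto simp: algebra_simps)

lemma sum_int_rev: "2 * (\<Sum>i=1..n. int (n - i)) = int n * (int n - 1)"
proof -
  have "(\<Sum>i=1..n. int i) + (\<Sum>i=1..n. int (n - i)) = (\<Sum>i=1..n. int n)"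
    unfolding sum.distrib[symmetric] by (rule sum.cong) auto
  then have "(\<Sum>i=1..n. int (n - i)) = int n * int n - (\<Sum>i=1..n. int i)" by simp
  then show ?thesis using sum_int_id[of n] by (simp add: algebra_simps)
qed

lemma half_pos: "2 * (x::int) = y \<Longrightarrow> x = y div 2" by auto
lemma half_neg: "2 * (x::int) = - y \<Longrightarrow> x = - (y div 2)" by auto
lemma half_eq: "2 * (x::int) = 2 * y \<Longrightarrow> x = y" by auto

lemma card_neg_all: "(\<And>i. 2 \<le> i \<Longrightarrow> D i < (0::int)) \<Longrightarrow> card {i\<in>{2..n}. D i < 0} = n - 1"
proof -
  assume "\<And>i. 2 \<le> i \<Longrightarrow> D i < (0::int)"
  then have "{i\<in>{2..n}. D i < 0} = {2..n}" by auto
  then show ?thesis by simp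
qed

lemma claim1:
  fixes q :: "'a::field"
  assumes q: "q \<noteq> 0" and n: "2 \<le> n" and c: "0 \<le> c"
  shows "Fq q (n-1) n c p [0] = Gq q (n-1) c p"
proof -
  interpret tr "\<lambda>_. 0" 0 c n by standard (use n in \<open>auto simp: btw_def\<close>)
  have PWa: "{a. is_pattern (n-1) n c a \<and> a n n = 0 \<and> card {j\<in>{1..n}. odd (a 1 j)} = p}
        = {a\<in>A_set (\<lambda>_. 0) 0 c n. card {j\<in>{1..n}. odd (a 1 j)} = p}"
  proof (intro equalityI subsetI)
    fix a assume "a \<in> {a. is_pattern (n-1) n c a \<and> a n n = 0 \<and> card {j\<in>{1..n}. odd (a 1 j)} = p}"
    then have P: "is_pattern (n-1) n c a" and k: "a n n = 0" and pp: "card {j\<in>{1..n}. odd (a 1 j)} = p" by auto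
    have diag: "\<And>i. 1 \<le> i \<Longrightarrow> i \<le> n \<Longrightarrow> a i i = 0" using diag_nonneg[OF P n] k by force
    have "\<And>i. 1 \<le> i \<Longrightarrow> i \<le> n-1 \<Longrightarrow> 0 \<le> a i (Suc i)"
      by (rule col_flat[OF P n _ diag]) (use c in auto)
    then show "a \<in> {a\<in>A_set (\<lambda>_. 0) 0 c n. card {j\<in>{1..n}. odd (a 1 j)} = p}"
      using P diag pp by (auto simp: A_set_def)
  next
    fix a assume "a \<in> {a\<in>A_set (\<lambda>_. 0) 0 c n. card {j\<in>{1..n}. odd (a 1 j)} = p}"
    then show "a \<in> {a. is_pattern (n-1) n c a \<and> a n n = 0 \<and> card {j\<in>{1..n}. odd (a 1 j)} = p}"
      using n by (auto simp: A_set_def)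
  qed
  have par: "(card {j\<in>{1..n}. odd (Phi (\<lambda>_. 0) 0 c n b 1 j)} = p) \<longleftrightarrow> (card {j\<in>{1..n-1}. odd (b 1 j)} = p)" for b
    using par_Phi[of b] by simp
  have "Fq q (n-1) n c p [(\<lambda>_. 0::int) n] = (-1) ^ card {i\<in>{2..n}. (0::int) < 0}
      * q powi ((\<Sum>i=1..n. (0::int)) - 0 * (\<Sum>i=1..n. int (n - i)) - 0) * Gq q (n-1) (c+0) p"
    by (rule transfer_main[OF q PWa par])
  then show ?thesis by simp
qed


lemma claim2:
  fixes q :: "'a::field"
  assumes q: "q \<noteq> 0" and n: "2 \<le> n" and c: "0 \<le> c" and p: "1 \<le> p"
  shows "Fq q (n-1) n c p [- int n] =
          (-1) ^ (n - 1) * q powi (- (3 * int n * (int n - 1) div 2)) * Gq q (n - 1) (c + 2) (p - 1)"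
proof -
  let ?D = "\<lambda>i::nat. - int i"
  interpret tr ?D 2 c n by standard (use n in \<open>auto simp: btw_def\<close>)
  have PWa: "{a. is_pattern (n-1) n c a \<and> a n n = ?D n \<and> card {j\<in>{1..n}. odd (a 1 j)} = p}
        = {a\<in>A_set ?D 2 c n. card {j\<in>{1..n}. odd (a 1 j)} = p}"
  proof (intro equalityI subsetI)
    fix a assume "a \<in> {a. is_pattern (n-1) n c a \<and> a n n = ?D n \<and> card {j\<in>{1..n}. odd (a 1 j)} = p}"
    then have P: "is_pattern (n-1) n c a" and k: "a n n = - int n" and pp: "card {j\<in>{1..n}. odd (a 1 j)} = p" by auto
    have kn: "a n n < 0" using k n by simp
    have lo: "- int i \<le> a i i" if "1 \<le> i" "i \<le> n" for i
      using diag_neg[OF P n kn, of i] that k by simp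
    have top: "a 1 1 \<le> -1 - 0" using diag_neg[OF P n kn, of 1] n by simp
    have diag: "\<And>i. 1 \<le> i \<Longrightarrow> i \<le> n \<Longrightarrow> a i i = - int i - 0"
      using lo diag_neg_up[OF P n kn top] by force
    have cs: "\<And>i. 1 \<le> i \<Longrightarrow> i \<le> n-1 \<Longrightarrow> -2 - 0 \<le> a i (Suc i)"
      by (rule col_stair[OF P n c _ diag]) auto
    have cs2: "\<forall>i. 1 \<le> i \<and> i \<le> n-1 \<longrightarrow> 0 \<le> a i (i+1) + 2"
      using cs by force
    then show "a \<in> {a\<in>A_set ?D 2 c n. card {j\<in>{1..n}. odd (a 1 j)} = p}"
      using P diag pp cs2 by (auto simp: A_set_def)
  next
    fix a assume "a \<in> {a\<in>A_set ?D 2 c n. card {j\<in>{1..n}. odd (a 1 j)} = p}"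
    then show "a \<in> {a. is_pattern (n-1) n c a \<and> a n n = ?D n \<and> card {j\<in>{1..n}. odd (a 1 j)} = p}"
      using n by (auto simp: A_set_def)
  qed
  have par: "(card {j\<in>{1..n}. odd (Phi ?D 2 c n b 1 j)} = p) \<longleftrightarrow> (card {j\<in>{1..n-1}. odd (b 1 j)} = p - 1)" for b
  proof -
    have "\<And>j. odd (b 1 j - 2) \<longleftrightarrow> odd (b 1 j)" by presburger
    then show ?thesis using par_Phi[of b] p by auto
  qed
  have "Fq q (n-1) n c p [?D n] = (-1) ^ card {i\<in>{2..n}. ?D i < 0}
      * q powi ((\<Sum>i=1..n. ?D i) - 2 * (\<Sum>i=1..n. int (n - i)) - ?D n) * Gq q (n-1) (c+2) (p - 1)"
    by (rule transfer_main[OF q PWa par])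
  moreover have "card {i\<in>{2..n}. ?D i < 0} = n - 1" by (rule card_neg_all) simp
  moreover have "(\<Sum>i=1..n. ?D i) - 2 * (\<Sum>i=1..n. int (n - i)) - ?D n = - (3 * int n * (int n - 1) div 2)"
  proof -
    have e: "(\<Sum>i=1..n. ?D i) = - (\<Sum>i=1..n. int i)" by (simp add: sum_negf)
    have "2 * ((\<Sum>i=1..n. ?D i) - 2 * (\<Sum>i=1..n. int (n - i)) - ?D n) = - (3 * int n * (int n - 1))"
      unfolding e using sum_int_id[of n] sum_int_rev[of n] by (simp add: algebra_simps)
    then show ?thesis by (rule half_neg)
  qed
  ultimately show ?thesis by simp
qed

lemma claim3:
  fixes q :: "'a::field"
  assumes q: "q \<noteq> 0" and n: "2 \<le> n" and c: "0 \<le> c"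
  shows "Fq q (n - 1) n c n [1] = q powi ((int n + 2) * (int n - 1) div 2) * Gq q (n - 1) (c - 1) 0"
proof -
  let ?D = "\<lambda>i::nat. (1::int)"
  interpret tr ?D "-1" c n by standard (use n in \<open>auto simp: btw_def\<close>)
  have PWa: "{a. is_pattern (n-1) n c a \<and> a n n = ?D n \<and> card {j\<in>{1..n}. odd (a 1 j)} = n}
        = {a\<in>A_set ?D (-1) c n. card {j\<in>{1..n}. odd (a 1 j)} = n}"
  proof (intro equalityI subsetI)
    fix a assume "a \<in> {a. is_pattern (n-1) n c a \<and> a n n = ?D n \<and> card {j\<in>{1..n}. odd (a 1 j)} = n}"
    then have P: "is_pattern (n-1) n c a" and k: "a n n = 1" and pp: "card {j\<in>{1..n}. odd (a 1 j)} = n" by auto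
    have rng: "0 \<le> a i i \<and> a i i \<le> 1" if "1 \<le> i" "i \<le> n" for i
      using diag_nonneg[OF P n, of i] that k by simp
    have "odd (a 1 1)" using card_all[OF pp] n by auto
    then have a11: "a 1 1 = 1" using rng[of 1] n by (auto simp: le_less)
    have diag: "\<And>i. 1 \<le> i \<Longrightarrow> i \<le> n \<Longrightarrow> a i i = 1"
    proof -
      fix i assume i: "1 \<le> i" "i \<le> n"
      then show "a i i = 1"
      proof (induction i rule: dec_induct)
        case base then show ?case using a11 by simp
      next
        case (step m)
        have "btw 0 (a (Suc m) (Suc m)) (a m m)" by (rule diag_step[OF P]) (use step in auto)
        then show ?case using step rng[of "Suc m"] by (auto simp: btw_def)
      qed
    qed
    have cs: "\<And>i. 1 \<le> i \<Longrightarrow> i \<le> n-1 \<Longrightarrow> 1 \<le> a i (Suc i)"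
      by (rule col_flat[OF P n _ diag]) (use c in auto)
    have cs2: "\<forall>i. 1 \<le> i \<and> i \<le> n-1 \<longrightarrow> 0 \<le> a i (i+1) + (-1)"
      using cs by force
    then show "a \<in> {a\<in>A_set ?D (-1) c n. card {j\<in>{1..n}. odd (a 1 j)} = n}"
      using P diag pp cs2 by (auto simp: A_set_def)
  next
    fix a assume "a \<in> {a\<in>A_set ?D (-1) c n. card {j\<in>{1..n}. odd (a 1 j)} = n}"
    then show "a \<in> {a. is_pattern (n-1) n c a \<and> a n n = ?D n \<and> card {j\<in>{1..n}. odd (a 1 j)} = n}"
      using n by (auto simp: A_set_def)
  qed
  have par: "(card {j\<in>{1..n}. odd (Phi ?D (-1) c n b 1 j)} = n) \<longleftrightarrow> (card {j\<in>{1..n-1}. odd (b 1 j)} = 0)" for b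
  proof -
    have "(card {j\<in>{1..n-1}. odd (b 1 j - -1)} = n - 1) \<longleftrightarrow> (\<forall>j\<in>{1..n-1}. odd (b 1 j - -1))"
    proof
      assume "card {j\<in>{1..n-1}. odd (b 1 j - -1)} = n - 1"
      then show "\<forall>j\<in>{1..n-1}. odd (b 1 j - -1)" by (rule card_all)
    next
      assume "\<forall>j\<in>{1..n-1}. odd (b 1 j - -1)"
      then have "{j\<in>{1..n-1}. odd (b 1 j - -1)} = {1..n-1}" by auto
      then show "card {j\<in>{1..n-1}. odd (b 1 j - -1)} = n - 1" by simp
    qed
    also have "\<dots> \<longleftrightarrow> (card {j\<in>{1..n-1}. odd (b 1 j)} = 0)" by auto
    finally show ?thesis using par_Phi[of b] n by auto
  qed
  have "Fq q (n-1) n c n [?D n] = (-1) ^ card {i\<in>{2..n}. ?D i < 0}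
      * q powi ((\<Sum>i=1..n. ?D i) - (-1) * (\<Sum>i=1..n. int (n - i)) - ?D n) * Gq q (n-1) (c + -1) 0"
    by (rule transfer_main[OF q PWa par])
  moreover have "(\<Sum>i=1..n. ?D i) - (-1) * (\<Sum>i=1..n. int (n - i)) - ?D n = (int n + 2) * (int n - 1) div 2"
  proof -
    have "2 * ((\<Sum>i=1..n. ?D i) - (-1) * (\<Sum>i=1..n. int (n - i)) - ?D n) = (int n + 2) * (int n - 1)"
      using sum_int_rev[of n] by (simp add: algebra_simps)
    then show ?thesis by (rule half_pos)
  qed
  ultimately show ?thesis by simp
qed

lemma claim4:
  fixes q :: "'a::field"
  assumes q: "q \<noteq> 0" and n: "2 \<le> n" and c: "0 \<le> c"
  shows "Fq q (n - 1) n c 0 [- int n - 1] =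
          (-1) ^ (n - 1) * q powi (- ((int n - 1) * (2 * int n + 1))) * Gq q (n - 1) (c + 3) (n - 1)"
proof -
  let ?D = "\<lambda>i::nat. - int i - 1"
  interpret tr ?D 3 c n by standard (use n in \<open>auto simp: btw_def\<close>)
  have PWa: "{a. is_pattern (n-1) n c a \<and> a n n = ?D n \<and> card {j\<in>{1..n}. odd (a 1 j)} = 0}
        = {a\<in>A_set ?D 3 c n. card {j\<in>{1..n}. odd (a 1 j)} = 0}"
  proof (intro equalityI subsetI)
    fix a assume "a \<in> {a. is_pattern (n-1) n c a \<and> a n n = ?D n \<and> card {j\<in>{1..n}. odd (a 1 j)} = 0}"
    then have P: "is_pattern (n-1) n c a" and k: "a n n = - int n - 1" and pp: "card {j\<in>{1..n}. odd (a 1 j)} = 0" by auto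
    have kn: "a n n < 0" using k n by simp
    have lo: "- int i - 1 \<le> a i i" if "1 \<le> i" "i \<le> n" for i
      using diag_neg[OF P n kn, of i] that k by simp
    have "even (a 1 1)" using card_none[OF pp] n by auto
    moreover have "a 1 1 < 0" "-2 \<le> a 1 1" using diag_neg[OF P n kn, of 1] lo[of 1] n by auto
    ultimately have top: "a 1 1 \<le> -1 - 1" by presburger
    have diag: "\<And>i. 1 \<le> i \<Longrightarrow> i \<le> n \<Longrightarrow> a i i = - int i - 1"
      using lo diag_neg_up[OF P n kn top] by force
    have cs: "\<And>i. 1 \<le> i \<Longrightarrow> i \<le> n-1 \<Longrightarrow> -2 - 1 \<le> a i (Suc i)"
      by (rule col_stair[OF P n c _ diag]) auto
    have cs2: "\<forall>i. 1 \<le> i \<and> i \<le> n-1 \<longrightarrow> 0 \<le> a i (i+1) + 3"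
      using cs by force
    then show "a \<in> {a\<in>A_set ?D 3 c n. card {j\<in>{1..n}. odd (a 1 j)} = 0}"
      using P diag pp cs2 by (auto simp: A_set_def)
  next
    fix a assume "a \<in> {a\<in>A_set ?D 3 c n. card {j\<in>{1..n}. odd (a 1 j)} = 0}"
    then show "a \<in> {a. is_pattern (n-1) n c a \<and> a n n = ?D n \<and> card {j\<in>{1..n}. odd (a 1 j)} = 0}"
      using n by (auto simp: A_set_def)
  qed
  have par: "(card {j\<in>{1..n}. odd (Phi ?D 3 c n b 1 j)} = 0) \<longleftrightarrow> (card {j\<in>{1..n-1}. odd (b 1 j)} = n - 1)" for b
  proof -
    have "(card {j\<in>{1..n-1}. odd (b 1 j)} = n - 1) \<longleftrightarrow> (\<forall>j\<in>{1..n-1}. odd (b 1 j))"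
    proof
      assume "card {j\<in>{1..n-1}. odd (b 1 j)} = n - 1"
      then show "\<forall>j\<in>{1..n-1}. odd (b 1 j)" by (rule card_all)
    next
      assume "\<forall>j\<in>{1..n-1}. odd (b 1 j)"
      then have "{j\<in>{1..n-1}. odd (b 1 j)} = {1..n-1}" by auto
      then show "card {j\<in>{1..n-1}. odd (b 1 j)} = n - 1" by simp
    qed
    moreover have "\<And>j. odd (b 1 j - 3) \<longleftrightarrow> even (b 1 j)" by presburger
    moreover have "odd (-2 :: int) = False" by simp
    ultimately show ?thesis using par_Phi[of b] n by auto
  qed
  have "Fq q (n-1) n c 0 [?D n] = (-1) ^ card {i\<in>{2..n}. ?D i < 0}
      * q powi ((\<Sum>i=1..n. ?D i) - 3 * (\<Sum>i=1..n. int (n - i)) - ?D n) * Gq q (n-1) (c+3) (n - 1)"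
    by (rule transfer_main[OF q PWa par])
  moreover have "card {i\<in>{2..n}. ?D i < 0} = n - 1" by (rule card_neg_all) simp
  moreover have "(\<Sum>i=1..n. ?D i) - 3 * (\<Sum>i=1..n. int (n - i)) - ?D n = - ((int n - 1) * (2 * int n + 1))"
  proof -
    have e: "(\<Sum>i=1..n. ?D i) = - (\<Sum>i=1..n. int i) - int n" by (simp add: sum_subtractf sum_negf)
    have "2 * ((\<Sum>i=1..n. ?D i) - 3 * (\<Sum>i=1..n. int (n - i)) - ?D n) = 2 * (- ((int n - 1) * (2 * int n + 1)))"
      unfolding e using sum_int_id[of n] sum_int_rev[of n] by (simp add: algebra_simps)
    then show ?thesis by (rule half_eq)
  qed
  ultimately show ?thesis by simp
qed

theorem lemma21:
  fixes q :: "'a::field" and n p :: nat and c :: int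
  assumes "q \<noteq> 0" and "n \<ge> 2" and "c \<ge> 0" and "p \<le> n"
  shows "(p \<noteq> n \<longrightarrow> Fq q (n - 1) n c p [0] = Gq q (n - 1) c p)
    \<and> (p \<noteq> 0 \<longrightarrow> Fq q (n - 1) n c p [- int n] =
          (-1) ^ (n - 1) * q powi (- (3 * int n * (int n - 1) div 2)) * Gq q (n - 1) (c + 2) (p - 1))
    \<and> Fq q (n - 1) n c n [1] = q powi ((int n + 2) * (int n - 1) div 2) * Gq q (n - 1) (c - 1) 0
    \<and> Fq q (n - 1) n c 0 [- int n - 1] =
          (-1) ^ (n - 1) * q powi (- ((int n - 1) * (2 * int n + 1))) * Gq q (n - 1) (c + 3) (n - 1)"
  using claim1[OF assms(1-3)] claim2[OF assms(1-3)] claim3[OF assms(1-3)] claim4[OF assms(1-3)]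
  by auto

end
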